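(* Let $\Phi$ be any positive, trace-preserving linear map on the hermitian $2\times2$ matrices, written as $$\Phi\big(\tfrac12(x_0I+\vec x\cdot\vec\sigma)\big)=\tfrac12\big(x_0 I+(x_0\vec t+\Lambda\vec x)\cdot\vec\sigma\big)$$ for some real $3\times3$ matrix $\Lambda$ and some $\vec t\in\mathbb{R}^3$. For $w\in\mathbb{R}$ consider the quadratic form $$q^\Phi_w(\mathbf{x})=\Phi(\mathbf{x})\cdot\Phi(\mathbf{x})-w\,\mathbf{x}\cdot\mathbf{x}.$$ Its matrix is $$Q^\Phi_w=\begin{pmatrix}1-|\vec t|^2-w & -\vec t^{\,T}\Lambda\\ -(\vec t^{\,T}\Lambda)^T & w I_3-\Lambda^T\Lambda\end{pmatrix}.$$ Then there exists a unique $w_0\in\mathbb{R}$ with the following three properties: - $Q^\Phi_{w_0}$ is positive semidefinite; - $Q^\Phi_{w_0}$ is degenerate; - $\ker Q^\Phi_{w_0}$ contains a non-zero vector $\mathbf{n}$ with $\mathbf{n}\cdot\mathbf{n}\le 0$. For this $w_0$, the concurrence of $\Phi$ satisfies $C_\Phi(\rho)=\sqrt{q^\Phi_{w_0}(\mathbf{x})}$ for every state $\rho=\tfrac12(I+\vec x\cdot\vec\sigma)$, where $\mathbf{x}=(1,\vec x)$.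
   Context: Hermitian $2\times2$ matrices are identified with Minkowski space $\mathbb{R}^{1,3}$ via $\mathbf{x}=(x_0,\vec x)\leftrightarrow\rho=\tfrac12(x_0I+\vec x\cdot\vec\sigma)$, where $\vec\sigma$ are the Pauli matrices. The Minkowski product is $\mathbf{x}\cdot\mathbf{y}=x_0y_0-\vec x\cdot\vec y$, so that $4\det\rho=\mathbf{x}\cdot\mathbf{x}$. We write $\Phi(\mathbf{x})$ for the vector corresponding to $\Phi(\rho)$. For a positive trace-preserving map $\Phi$ into $2\times 2$ matrices, the concurrence is defined as follows. For a pure state $\pi$, $C_\Phi(\pi)=2\sqrt{\det\Phi(\pi)}$. For a general state, $$C_\Phi(\rho)=\min\sum_j p_j C_\Phi(\pi_j),$$ where the minimum is over all decompositions $\rho=\sum_j p_j\pi_j$ into pure states with $p_j>0$ and $\sum p_j=1$. *)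

theory Defs
  imports "HOL-Analysis.Analysis"
begin

type_synonym mvec = "real \<times> (real^3)"

definition mink :: "mvec \<Rightarrow> mvec \<Rightarrow> real" where
  "mink x y = fst x * fst y - snd x \<bullet> snd y"

definition PhiM :: "real^3^3 \<Rightarrow> real^3 \<Rightarrow> mvec \<Rightarrow> mvec" where
  "PhiM Lam t x = (fst x, fst x *\<^sub>R t + Lam *v snd x)"

definition sigma1 :: "complex^2^2" where
  "sigma1 = (\<chi> i j. if i = j then 0 else 1)"

definition sigma2 :: "complex^2^2" where
  "sigma2 = (\<chi> i j. if i = j then 0 else if i = 1 then - \<i> else \<i>)"

definition sigma3 :: "complex^2^2" where
  "sigma3 = (\<chi> i j. if i \<noteq> j then 0 else if i = 1 then 1 else -1)"

definition hmat :: "mvec \<Rightarrow> complex^2^2" where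
  "hmat x = (1/2) *\<^sub>R (fst x *\<^sub>R mat 1 + (snd x $ 1) *\<^sub>R sigma1
                + (snd x $ 2) *\<^sub>R sigma2 + (snd x $ 3) *\<^sub>R sigma3)"

text \<open>Positivity of Phi: it maps positive semidefinite matrices (forward light cone
  x0 \<ge> |xv|) to positive semidefinite matrices.\<close>

definition positive_map :: "real^3^3 \<Rightarrow> real^3 \<Rightarrow> bool" where
  "positive_map Lam t \<longleftrightarrow>
     (\<forall>x0 xv. norm xv \<le> x0 \<longrightarrow> norm (snd (PhiM Lam t (x0, xv))) \<le> fst (PhiM Lam t (x0, xv)))"

definition qform :: "real^3^3 \<Rightarrow> real^3 \<Rightarrow> real \<Rightarrow> mvec \<Rightarrow> real" where
  "qform Lam t w x = mink (PhiM Lam t x) (PhiM Lam t x) - w * mink x x"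

definition Qmat :: "real^3^3 \<Rightarrow> real^3 \<Rightarrow> real \<Rightarrow> mvec \<Rightarrow> mvec" where
  "Qmat Lam t w n =
     (let b = - (t v* Lam) in
      ((1 - (norm t)\<^sup>2 - w) * fst n + b \<bullet> snd n,
       fst n *\<^sub>R b + (w *\<^sub>R (mat 1 :: real^3^3) - transpose Lam ** Lam) *v snd n))"

definition eucl :: "mvec \<Rightarrow> mvec \<Rightarrow> real" where
  "eucl x y = fst x * fst y + snd x \<bullet> snd y"

definition Q_psd :: "real^3^3 \<Rightarrow> real^3 \<Rightarrow> real \<Rightarrow> bool" where
  "Q_psd Lam t w \<longleftrightarrow> (\<forall>x. eucl x (Qmat Lam t w x) \<ge> 0)"

definition Q_ker :: "real^3^3 \<Rightarrow> real^3 \<Rightarrow> real \<Rightarrow> mvec set" where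
  "Q_ker Lam t w = {n. Qmat Lam t w n = 0}"

definition Q_degenerate :: "real^3^3 \<Rightarrow> real^3 \<Rightarrow> real \<Rightarrow> bool" where
  "Q_degenerate Lam t w \<longleftrightarrow> Q_ker Lam t w \<noteq> {0}"

definition conc_pure :: "real^3^3 \<Rightarrow> real^3 \<Rightarrow> real^3 \<Rightarrow> real" where
  "conc_pure Lam t y = 2 * sqrt (Re (det (hmat (PhiM Lam t (1, y)))))"

definition decomp_values :: "real^3^3 \<Rightarrow> real^3 \<Rightarrow> real^3 \<Rightarrow> real set" where
  "decomp_values Lam t xv =
     {(\<Sum>j\<in>J. p j * conc_pure Lam t (y j)) | J p y.
        finite (J :: nat set) \<and> J \<noteq> {} \<and> (\<forall>j\<in>J. p j > 0 \<and> norm (y j) = 1) \<and>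
        sum p J = 1 \<and> (\<Sum>j\<in>J. p j *\<^sub>R y j) = xv}"

end

theory Submission
  imports Defs
begin


definition Bf :: "real^3^3 \<Rightarrow> real^3 \<Rightarrow> real \<Rightarrow> mvec \<Rightarrow> mvec \<Rightarrow> real" where
  "Bf Lam t w x y = mink (PhiM Lam t x) (PhiM Lam t y) - w * mink x y"

lemma mink_sym: "mink x y = mink y x"
  by (simp add: mink_def inner_commute mult.commute)

lemma mink_add: "mink (x + y) z = mink x z + mink y z"
  by (simp add: mink_def algebra_simps inner_add_left)

lemma mink_scale: "mink (c *\<^sub>R x) z = c * mink x z"
  by (simp add: mink_def algebra_simps)

lemma PhiM_add: "PhiM Lam t (x + y) = PhiM Lam t x + PhiM Lam t y"
  by (simp add: PhiM_def algebra_simps scaleR_add_left)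

lemma PhiM_scale: "PhiM Lam t (c *\<^sub>R x) = c *\<^sub>R PhiM Lam t x"
  by (simp add: PhiM_def algebra_simps)

lemma Bf_sym: "Bf Lam t w x y = Bf Lam t w y x"
  by (simp add: Bf_def mink_sym)

lemma Bf_add: "Bf Lam t w (x + y) z = Bf Lam t w x z + Bf Lam t w y z"
  by (simp add: Bf_def PhiM_add mink_add algebra_simps)

lemma Bf_scale: "Bf Lam t w (c *\<^sub>R x) z = c * Bf Lam t w x z"
  by (simp add: Bf_def PhiM_scale mink_scale algebra_simps)

lemma Bf_add2: "Bf Lam t w z (x + y) = Bf Lam t w z x + Bf Lam t w z y"
  by (metis Bf_sym Bf_add)

lemma Bf_scale2: "Bf Lam t w z (c *\<^sub>R x) = c * Bf Lam t w z x"
  by (metis Bf_sym Bf_scale)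

lemma eucl_Qmat: "eucl y (Qmat Lam t w x) = Bf Lam t w x y"
proof -
  obtain x0 xv where x: "x = (x0, xv)" by force
  obtain y0 yv where y: "y = (y0, yv)" by force
  have e1: "(t v* Lam) \<bullet> v = t \<bullet> (Lam *v v)" for v by (simp add: dot_lmul_matrix)
  have e1': "v \<bullet> (t v* Lam) = t \<bullet> (Lam *v v)" for v by (metis e1 inner_commute)
  have e2: "yv \<bullet> ((transpose Lam ** Lam) *v xv) = (Lam *v xv) \<bullet> (Lam *v yv)"
    by (metis dot_lmul_matrix inner_commute matrix_vector_mul_assoc transpose_matrix_vector)
  have e3: "yv \<bullet> ((w *\<^sub>R (mat 1 :: real^3^3) - transpose Lam ** Lam) *v xv)
     = w * (yv \<bullet> xv) - (Lam *v xv) \<bullet> (Lam *v yv)"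
  proof -
    have "(w *\<^sub>R (mat 1 :: real^3^3)) *v xv = w *\<^sub>R xv"
      by (metis scaleR_matrix_vector_assoc matrix_vector_mul_lid)
    then show ?thesis using e2 by (simp add: matrix_vector_mult_diff_rdistrib inner_diff_right)
  qed
  show ?thesis
    unfolding x y eucl_def Qmat_def Bf_def mink_def PhiM_def Let_def
    using e3 by (simp add: e1 e1' inner_add_left inner_add_right inner_diff_right algebra_simps
          power2_norm_eq_inner inner_commute)
qed

lemma qform_Bf: "qform Lam t w x = Bf Lam t w x x"
  by (simp add: qform_def Bf_def)

lemma Bf_w: "Bf Lam t w x y = Bf Lam t 0 x y - w * mink x y"
  by (simp add: Bf_def)

lemma Bf_expand: "Bf Lam t w (a *\<^sub>R x + y) (a *\<^sub>R x + y)
   = a\<^sup>2 * Bf Lam t w x x + 2 * a * Bf Lam t w x y + Bf Lam t w y y"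
  by (simp add: Bf_add Bf_add2 Bf_scale Bf_scale2 Bf_sym[of _ _ _ y x] power2_eq_square algebra_simps)

lemma mink_add2: "mink z (x + y) = mink z x + mink z y"
  by (metis mink_sym mink_add)

lemma mink_scale2: "mink z (c *\<^sub>R x) = c * mink z x"
  by (metis mink_sym mink_scale)

lemma mink_expand: "mink (a *\<^sub>R x + y) (a *\<^sub>R x + y)
   = a\<^sup>2 * mink x x + 2 * a * mink x y + mink y y"
  by (simp add: mink_add mink_add2 mink_scale mink_scale2 mink_sym[of y x] power2_eq_square algebra_simps)

lemma eucl_self_eq0: "eucl z z = 0 \<Longrightarrow> z = 0"
proof -
  assume "eucl z z = 0"
  then have "fst z * fst z + snd z \<bullet> snd z = 0" by (simp add: eucl_def)
  moreover have "fst z * fst z \<ge> 0" by simp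
  moreover have "snd z \<bullet> snd z \<ge> 0" by simp
  ultimately have "fst z * fst z = 0 \<and> snd z \<bullet> snd z = 0" by (simp add: add_nonneg_eq_0_iff)
  then have "fst z = 0" "snd z = 0" by auto
  then show "z = 0" by (simp add: prod_eq_iff)
qed

lemma Q_psd_Bf: "Q_psd Lam t w \<longleftrightarrow> (\<forall>x. Bf Lam t w x x \<ge> 0)"
  unfolding Q_psd_def by (simp only: eucl_Qmat)

lemma ker_Bf: "n \<in> Q_ker Lam t w \<Longrightarrow> Bf Lam t w n y = 0"
proof -
  assume "n \<in> Q_ker Lam t w"
  then have "Qmat Lam t w n = 0" by (simp add: Q_ker_def)
  then have "eucl y (Qmat Lam t w n) = 0" by (simp add: eucl_def)
  then show ?thesis by (simp only: eucl_Qmat)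
qed

lemma psd_ker:
  assumes psd: "Q_psd Lam t w" and n0: "Bf Lam t w n n = 0"
  shows "n \<in> Q_ker Lam t w"
proof -
  have B0: "Bf Lam t w n y = 0" for y
  proof (rule ccontr)
    assume B: "Bf Lam t w n y \<noteq> 0"
    define c where "c = Bf Lam t w y y"
    define b where "b = Bf Lam t w n y"
    have c0: "c \<ge> 0" using psd unfolding Q_psd_Bf c_def by blast
    define d where "d = c + 1"
    have dpos: "d > 0" using c0 by (simp add: d_def)
    define s where "s = - b / d"
    have "0 \<le> Bf Lam t w (s *\<^sub>R y + n) (s *\<^sub>R y + n)" using psd unfolding Q_psd_Bf by blast
    also have "\<dots> = s\<^sup>2 * c + 2 * s * b"
      using n0 by (simp add: Bf_expand c_def b_def Bf_sym[of _ _ _ y n])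
    finally have ge: "0 \<le> s\<^sup>2 * c + 2 * s * b" .
    have sd: "s * d = - b" unfolding s_def using dpos by simp
    have "(s\<^sup>2 * c + 2 * s * b) * d\<^sup>2 = (s * d)\<^sup>2 * c + 2 * (s * d) * b * d"
      by (simp add: power2_eq_square algebra_simps)
    also have "\<dots> = b\<^sup>2 * (c - 2 * d)" unfolding sd by (simp add: power2_eq_square algebra_simps)
    also have "\<dots> < 0"
    proof -
      have "b\<^sup>2 > 0" using B b_def by simp
      moreover have "c - 2 * d < 0" using c0 d_def by simp
      ultimately show ?thesis by (simp add: mult_pos_neg)
    qed
    finally have "(s\<^sup>2 * c + 2 * s * b) * d\<^sup>2 < 0" .
    then have "s\<^sup>2 * c + 2 * s * b < 0" using dpos by (simp add: mult_less_0_iff)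
    then show False using ge by simp
  qed
  have "eucl (Qmat Lam t w n) (Qmat Lam t w n) = 0" by (simp add: eucl_Qmat B0)
  then have "Qmat Lam t w n = 0" by (rule eucl_self_eq0)
  then show ?thesis by (simp add: Q_ker_def)
qed

lemma mink_nondeg: "(\<And>y. mink n y = 0) \<Longrightarrow> n = 0"
proof -
  assume "\<And>y. mink n y = 0"
  then have "mink n (fst n, - snd n) = 0" by blast
  then have "eucl n n = 0" by (simp add: mink_def eucl_def)
  then show "n = 0" by (rule eucl_self_eq0)
qed

lemma uniq_aux:
  assumes w12: "w1 < w2"
    and p1: "Q_psd Lam t w1" and p2: "Q_psd Lam t w2"
    and n2: "n2 \<in> Q_ker Lam t w2" "n2 \<noteq> 0" "mink n2 n2 \<le> 0"
  shows False
proof -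
  have f2: "Bf Lam t 0 n2 n2 = w2 * mink n2 n2"
    using ker_Bf[OF n2(1), of n2] by (simp add: Bf_w[of _ _ w2])
  have "Bf Lam t w1 n2 n2 \<ge> 0" using p1 unfolding Q_psd_Bf by blast
  then have "(w2 - w1) * mink n2 n2 \<ge> 0" using f2 by (simp add: Bf_w[of _ _ w1] algebra_simps)
  then have g0: "mink n2 n2 = 0" using w12 n2(3)
    by (metis diff_gt_0_iff_gt linorder_not_less mult_pos_neg order_antisym_conv)
  then have "Bf Lam t w1 n2 n2 = 0" using f2 by (simp add: Bf_w[of _ _ w1])
  then have k1: "n2 \<in> Q_ker Lam t w1" by (rule psd_ker[OF p1])
  have "mink n2 y = 0" for y
  proof -
    have "Bf Lam t w1 n2 y = 0" "Bf Lam t w2 n2 y = 0" using ker_Bf k1 n2(1) by auto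
    then show ?thesis using w12 by (auto simp: Bf_w[of _ _ w1] Bf_w[of _ _ w2])
  qed
  then have "n2 = 0" by (rule mink_nondeg)
  then show False using n2 by simp
qed

lemma pos_f:
  assumes pm: "positive_map Lam t" and g: "mink z z \<ge> 0"
  shows "Bf Lam t 0 z z \<ge> 0"
proof -
  obtain z0 zv where z: "z = (z0, zv)" by force
  have "zv \<bullet> zv \<le> z0 ^ 2" using g by (simp add: z mink_def power2_eq_square)
  then have "norm zv ^ 2 \<le> z0 ^ 2" by (simp add: power2_norm_eq_inner)
  then have nz: "norm zv \<le> \<bar>z0\<bar>" using abs_le_square_iff[of "norm zv" z0] by simp
  define v where "v = z0 *\<^sub>R t + Lam *v zv"
  have f: "Bf Lam t 0 z z = z0 ^ 2 - norm v ^ 2"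
    by (simp add: Bf_def mink_def PhiM_def z v_def dot_square_norm power2_eq_square[of z0])
  have nv: "norm v \<le> \<bar>z0\<bar>"
  proof (cases "z0 \<ge> 0")
    case True
    from pm have "norm zv \<le> z0 \<longrightarrow> norm (snd (PhiM Lam t (z0, zv))) \<le> fst (PhiM Lam t (z0, zv))"
      unfolding positive_map_def by blast
    then have "norm v \<le> z0" using nz True by (simp add: PhiM_def v_def)
    then show ?thesis using True by simp
  next
    case False
    from pm have "norm (- zv) \<le> - z0 \<longrightarrow> norm (snd (PhiM Lam t (-z0, -zv))) \<le> fst (PhiM Lam t (-z0, -zv))"
      unfolding positive_map_def by blast
    moreover have "Lam *v (- zv) = - (Lam *v zv)" using matrix_vector_mult_diff_distrib[of Lam 0 zv] by simp
    then have "snd (PhiM Lam t (-z0, -zv)) = - v" by (simp add: PhiM_def v_def)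
    moreover have "norm (- zv) \<le> - z0" using nz False by simp
    ultimately have "norm (- v) \<le> - z0" by (simp add: PhiM_def)
    then have "norm v \<le> - z0" by (simp only: norm_minus_cancel)
    then show ?thesis using False by simp
  qed
  have "norm v ^ 2 \<le> \<bar>z0\<bar> ^ 2" by (rule power_mono[OF nv norm_ge_zero])
  then show ?thesis unfolding f by simp
qed

lemma Bf_scale_both: "Bf Lam t w (c *\<^sub>R x) (c *\<^sub>R x) = c\<^sup>2 * Bf Lam t w x x"
  by (simp add: Bf_scale Bf_scale2 power2_eq_square)

lemma mink_scale_both: "mink (c *\<^sub>R x) (c *\<^sub>R x) = c\<^sup>2 * mink x x"
  by (simp add: mink_scale mink_scale2 power2_eq_square)

lemma root_lemma:
  fixes a b G r s :: real
  assumes a: "a \<noteq> 0" and r: "r * a = - G + s \<or> r * a = - G - s" and s: "s\<^sup>2 = G\<^sup>2 - a * b"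
  shows "a * r\<^sup>2 + 2 * G * r + b = 0"
proof -
  have e: "a * (a * r\<^sup>2 + 2 * G * r + b) = (r * a + G)\<^sup>2 - G\<^sup>2 + a * b"
    by (simp add: power2_eq_square algebra_simps)
  have "(r * a + G)\<^sup>2 = s\<^sup>2" using r by (auto simp: power2_eq_square)
  then have "a * (a * r\<^sup>2 + 2 * G * r + b) = 0" using e s by simp
  then show ?thesis using a by simp
qed

lemma twoD:
  assumes pm: "positive_map Lam t" and gx: "mink x x > 0" and gy: "mink y y < 0"
  shows "Bf Lam t 0 y y / mink y y \<le> Bf Lam t 0 x x / mink x x"
proof (rule ccontr)
  assume A: "\<not> ?thesis"
  define p where "p = Bf Lam t 0 x x / mink x x"
  define q where "q = Bf Lam t 0 y y / mink y y"
  have pq: "p < q" using A p_def q_def by simp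
  define c where "c = (p + q) / 2"
  have "Bf Lam t 0 x x / mink x x < c" using pq by (simp add: c_def p_def[symmetric])
  then have "Bf Lam t 0 x x < c * mink x x" using gx by (simp add: divide_less_eq)
  then have hx: "Bf Lam t c x x < 0" by (simp add: Bf_w[of _ _ c])
  have "c < Bf Lam t 0 y y / mink y y" using pq by (simp add: c_def q_def[symmetric])
  then have "Bf Lam t 0 y y < c * mink y y" using gy by (simp add: less_divide_eq)
  then have hy: "Bf Lam t c y y < 0" by (simp add: Bf_w[of _ _ c])
  define G where "G = mink x y"
  define a where "a = mink x x"
  define b where "b = mink y y"
  define H where "H = Bf Lam t c x y"
  define D where "D = G\<^sup>2 - a * b"
  have ab: "a * b < 0" using gx gy a_def b_def by (simp add: mult_pos_neg)
  have DG: "G\<^sup>2 < D" using ab D_def by simp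
  define sD where "sD = sqrt D"
  have D0: "D \<ge> 0" using DG by (smt (verit) zero_le_power2)
  have sD2: "sD\<^sup>2 = G\<^sup>2 - a * b" using D0 by (simp add: sD_def D_def)
  have Gs: "\<bar>G\<bar> < sD" unfolding sD_def using real_sqrt_less_mono[OF DG] by simp
  have key: "a * r\<^sup>2 + 2 * G * r + b = 0 \<Longrightarrow> Bf Lam t c x x * r\<^sup>2 + 2 * H * r + Bf Lam t c y y \<ge> 0" for r
  proof -
    assume r: "a * r\<^sup>2 + 2 * G * r + b = 0"
    have "mink (r *\<^sub>R x + y) (r *\<^sub>R x + y) = r\<^sup>2 * a + 2 * r * G + b"
      by (simp only: mink_expand a_def b_def G_def)
    then have "mink (r *\<^sub>R x + y) (r *\<^sub>R x + y) = 0" using r by (simp add: algebra_simps)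
    then have "Bf Lam t 0 (r *\<^sub>R x + y) (r *\<^sub>R x + y) \<ge> 0" using pos_f[OF pm] by simp
    moreover have "Bf Lam t c (r *\<^sub>R x + y) (r *\<^sub>R x + y) = Bf Lam t 0 (r *\<^sub>R x + y) (r *\<^sub>R x + y)"
      using \<open>mink (r *\<^sub>R x + y) (r *\<^sub>R x + y) = 0\<close> by (simp add: Bf_w[of _ _ c])
    moreover have "Bf Lam t c (r *\<^sub>R x + y) (r *\<^sub>R x + y) = r\<^sup>2 * Bf Lam t c x x + 2 * r * H + Bf Lam t c y y"
      by (simp only: Bf_expand H_def)
    moreover have "r\<^sup>2 * Bf Lam t c x x + 2 * r * H + Bf Lam t c y y = Bf Lam t c x x * r\<^sup>2 + 2 * H * r + Bf Lam t c y y"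
      by (simp only: mult.commute mult.left_commute)
    ultimately show ?thesis by linarith
  qed
  have a0: "a > 0" using gx by (simp only: a_def)
  show False
  proof (cases "H \<le> 0")
    case True
    define r where "r = (- G + sD) / a"
    have "r * a = - G + sD" using a0 by (simp add: r_def)
    then have "a * r\<^sup>2 + 2 * G * r + b = 0" using root_lemma[of a r G sD b] a0 sD2 by simp
    then have ge: "Bf Lam t c x x * r\<^sup>2 + 2 * H * r + Bf Lam t c y y \<ge> 0" by (rule key)
    have "- G + sD > 0" using Gs abs_ge_self[of G] by linarith
    then have rp: "r > 0" using a0 unfolding r_def by (rule divide_pos_pos)
    have "Bf Lam t c x x * r\<^sup>2 < 0" using hx rp by (simp add: mult_neg_pos)
    moreover have "2 * H * r \<le> 0" using True rp by (simp add: mult_nonpos_nonneg)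
    ultimately show False using ge hy by linarith
  next
    case False
    define r where "r = (- G - sD) / a"
    have "r * a = - G - sD" using a0 by (simp add: r_def)
    then have "a * r\<^sup>2 + 2 * G * r + b = 0" using root_lemma[of a r G sD b] a0 sD2 by simp
    then have ge: "Bf Lam t c x x * r\<^sup>2 + 2 * H * r + Bf Lam t c y y \<ge> 0" by (rule key)
    have "- G - sD < 0" using Gs abs_ge_minus_self[of G] by linarith
    then have rn: "r < 0" using a0 unfolding r_def by (rule divide_neg_pos)
    have "Bf Lam t c x x * r\<^sup>2 \<le> 0" using hx by (simp add: mult_nonpos_nonneg)
    moreover have "2 * H * r < 0" using False rn by (simp add: mult_pos_neg)
    ultimately show False using ge hy by linarith
  qed
qed




lemma g_lower: "mink u u \<ge> - (norm u)\<^sup>2"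
proof -
  have "(norm u)\<^sup>2 = (fst u)\<^sup>2 + (norm (snd u))\<^sup>2" by (simp add: norm_prod_def)
  moreover have "mink u u = (fst u)\<^sup>2 - (norm (snd u))\<^sup>2"
    by (simp add: mink_def power2_eq_square dot_square_norm)
  moreover have "(fst u)\<^sup>2 \<ge> 0" by simp
  ultimately show ?thesis by linarith
qed

lemma cont_Bf: "continuous_on UNIV (\<lambda>y. Bf Lam t w y y)"
proof -
  have lin: "continuous_on UNIV (\<lambda>y::mvec. Lam *v snd y)"
    by (rule bounded_linear.continuous_on[OF matrix_vector_mul_bounded_linear]) (intro continuous_intros)
  show ?thesis unfolding Bf_def mink_def PhiM_def fst_conv snd_conv
    by (intro continuous_intros lin)
qed

lemma cont_g: "continuous_on UNIV (\<lambda>y::mvec. mink y y)"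
  unfolding mink_def by (intro continuous_intros)

lemma exists_w0:
  assumes pm: "positive_map Lam t"
  shows "\<exists>w0. Q_psd Lam t w0 \<and> (\<exists>n\<in>Q_ker Lam t w0. n \<noteq> 0 \<and> mink n n \<le> 0)"
proof -
  define S where "S = {Bf Lam t 0 y y / mink y y | y. mink y y < 0}"
  have memS: "Bf Lam t 0 y y / mink y y \<in> S" if "mink y y < 0" for y
    unfolding S_def using that by blast
  have elS: "\<exists>y. s = Bf Lam t 0 y y / mink y y \<and> mink y y < 0" if "s \<in> S" for s
    using that unfolding S_def by blast
  define e0 :: mvec where "e0 = (1, 0)"
  define y0 :: mvec where "y0 = (0, axis 1 1)"
  have ge0: "mink e0 e0 = 1" by (simp add: e0_def mink_def)
  have gy0: "mink y0 y0 = -1" by (simp add: y0_def mink_def inner_axis_axis)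
  have "Bf Lam t 0 y0 y0 / mink y0 y0 \<in> S" using gy0 by (intro memS) simp
  then have Sne: "S \<noteq> {}" by auto
  have Sbd: "s \<le> Bf Lam t 0 e0 e0 / mink e0 e0" if "s \<in> S" for s
    using elS[OF that] twoD[OF pm, of e0] ge0 by force
  then have bdd: "bdd_above S" by (rule bdd_aboveI)
  define L where "L = Sup S"
  have upper: "Bf Lam t 0 y y / mink y y \<le> L" if "mink y y < 0" for y
    unfolding L_def using that by (intro cSup_upper bdd memS)
  have psd_all: "Bf Lam t L z z \<ge> 0" for z
  proof -
    have e: "Bf Lam t L z z = Bf Lam t 0 z z - L * mink z z" by (simp add: Bf_w[of _ _ L])
    consider "mink z z < 0" | "mink z z > 0" | "mink z z = 0" by linarith
    then show ?thesis
    proof cases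
      case 1
      then have "Bf Lam t 0 z z / mink z z \<le> L" by (rule upper)
      then have "L * mink z z \<le> Bf Lam t 0 z z" using 1 by (simp add: divide_le_eq)
      then show ?thesis using e by simp
    next
      case 2
      have "L \<le> Bf Lam t 0 z z / mink z z" unfolding L_def
      proof (rule cSup_least[OF Sne])
        fix s assume "s \<in> S"
        then show "s \<le> Bf Lam t 0 z z / mink z z" using twoD[OF pm 2] elS by force
      qed
      then have "L * mink z z \<le> Bf Lam t 0 z z" using 2 by (simp add: le_divide_eq)
      then show ?thesis using e by simp
    next
      case 3
      then show ?thesis using e pos_f[OF pm, of z] by simp
    qed
  qed
  then have psdL: "Q_psd Lam t L" by (simp add: Q_psd_Bf)
  define K where "K = sphere (0::mvec) 1 \<inter> {y. mink y y \<le> 0}"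
  have Kc: "compact K" unfolding K_def
    by (intro compact_Int_closed compact_sphere closed_Collect_le cont_g continuous_on_const)
  have y0K: "y0 \<in> K" using gy0 by (simp add: K_def y0_def norm_Pair)
  obtain n where nK: "n \<in> K" and nmin: "\<And>y. y \<in> K \<Longrightarrow> Bf Lam t L n n \<le> Bf Lam t L y y"
    using continuous_attains_inf[OF Kc _ continuous_on_subset[OF cont_Bf]] y0K by blast
  have n1: "norm n = 1" and gn: "mink n n \<le> 0" using nK by (auto simp: K_def)
  show ?thesis
  proof (cases "Bf Lam t L n n = 0")
    case True
    then have "n \<in> Q_ker Lam t L" by (rule psd_ker[OF psdL])
    moreover have "n \<noteq> 0" using n1 by auto
    ultimately show ?thesis using psdL gn by blast
  next
    case False
    define m where "m = Bf Lam t L n n"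
    have m0: "m > 0" using False psd_all[of n] by (simp add: m_def)
    have "L \<le> L - m" unfolding L_def[symmetric]
    proof -
      have "Sup S \<le> L - m"
      proof (rule cSup_least[OF Sne])
        fix s assume "s \<in> S"
        then obtain y where sy: "s = Bf Lam t 0 y y / mink y y" and gy: "mink y y < 0"
          using elS by blast
        have y0: "y \<noteq> 0" using gy by (auto simp: mink_def)
        define u where "u = (1 / norm y) *\<^sub>R y"
        have ny: "norm y > 0" using y0 by simp
        have yu: "y = norm y *\<^sub>R u" using ny by (simp add: u_def)
        have nu: "norm u = 1" using ny by (simp add: u_def)
        have fyu: "Bf Lam t 0 y y = (norm y)\<^sup>2 * Bf Lam t 0 u u"
          by (subst yu, subst yu, rule Bf_scale_both)
        have gyu: "mink y y = (norm y)\<^sup>2 * mink u u"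
          by (subst yu, subst yu, rule mink_scale_both)
        have "(norm y)\<^sup>2 * mink u u < 0" using gy gyu by simp
        then have gu: "mink u u < 0" using ny by (simp add: mult_less_0_iff)
        have uK: "u \<in> K" using nu gu by (simp add: K_def)
        have "Bf Lam t L u u \<ge> m" using nmin[OF uK] by (simp add: m_def)
        moreover have gm1: "mink u u \<ge> -1" using g_lower[of u] nu by simp
        moreover have "m * mink u u \<ge> m * (-1)" using mult_left_mono[OF gm1, of m] m0 by simp
        ultimately have "Bf Lam t L u u + m * mink u u \<ge> 0" by linarith
        then have "Bf Lam t 0 u u \<ge> (L - m) * mink u u"
          by (simp add: Bf_w[of _ _ L] algebra_simps)
        then have "Bf Lam t 0 u u / mink u u \<le> L - m" using gu by (simp add: divide_le_eq)
        moreover have "s = Bf Lam t 0 u u / mink u u" using sy fyu gyu ny by simp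
        ultimately show "s \<le> L - m" by simp
      qed
      then show ?thesis by (simp add: L_def)
    qed
    then show ?thesis using m0 by simp
  qed
qed




lemma det_hmat: "Re (det (hmat z)) = mink z z / 4"
proof -
  obtain z0 zv where z: "z = (z0, zv)" by force
  have n: "zv \<bullet> zv = (zv$1)\<^sup>2 + (zv$2)\<^sup>2 + (zv$3)\<^sup>2"
    by (simp add: inner_vec_def sum_3 power2_eq_square)
  show ?thesis
    unfolding z det_2 hmat_def sigma1_def sigma2_def sigma3_def mink_def
    using n by (simp add: mat_def power2_eq_square algebra_simps)
qed

lemma conc_formula:
  assumes "norm y = 1"
  shows "conc_pure Lam t y = sqrt (qform Lam t w (1, y))"
proof -
  have g: "mink (1, y) (1, y) = 0" using assms by (simp add: mink_def dot_square_norm)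
  have "conc_pure Lam t y = 2 * sqrt (mink (PhiM Lam t (1, y)) (PhiM Lam t (1, y)) / 4)"
    by (simp add: conc_pure_def det_hmat)
  also have "\<dots> = sqrt (mink (PhiM Lam t (1, y)) (PhiM Lam t (1, y)))"
    by (simp add: real_sqrt_divide)
  also have "\<dots> = sqrt (qform Lam t w (1, y))" by (simp add: qform_def g)
  finally show ?thesis .
qed

lemma Bf_zero: "Bf Lam t w 0 0 = 0"
  using Bf_scale_both[of Lam t w 0 0] by simp

lemma CS:
  assumes psd: "Q_psd Lam t w"
  shows "Bf Lam t w x y \<le> sqrt (Bf Lam t w x x) * sqrt (Bf Lam t w y y)"
proof -
  define a where "a = Bf Lam t w x x"
  define b where "b = Bf Lam t w x y"
  define c where "c = Bf Lam t w y y"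
  have nn: "0 \<le> a * s\<^sup>2 + 2 * s * b + c" for s
  proof -
    have "0 \<le> Bf Lam t w (s *\<^sub>R x + y) (s *\<^sub>R x + y)" using psd unfolding Q_psd_Bf by blast
    also have "\<dots> = s\<^sup>2 * a + 2 * s * b + c" by (simp only: Bf_expand a_def b_def c_def)
    finally show ?thesis by (simp add: mult.commute)
  qed
  have a0: "a \<ge> 0" "c \<ge> 0" using psd unfolding Q_psd_Bf a_def c_def by blast+
  have "b\<^sup>2 \<le> a * c"
  proof (cases "a = 0")
    case True
    show ?thesis
    proof (rule ccontr)
      assume "\<not> ?thesis"
      then have b0: "b \<noteq> 0" using True by simp
      have "0 \<le> 2 * (- (c + 1) / (2 * b)) * b + c" using nn[of "- (c + 1) / (2 * b)"] True by simp
      also have "\<dots> = -1" using b0 by (simp add: field_simps)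
      finally show False by simp
    qed
  next
    case False
    then have ap: "a > 0" using a0 by simp
    have "0 \<le> a * (- b / a)\<^sup>2 + 2 * (- b / a) * b + c" by (rule nn)
    also have "a * (- b / a)\<^sup>2 + 2 * (- b / a) * b + c = c - b\<^sup>2 / a"
      using ap by (simp add: power2_eq_square field_simps)
    finally have "b\<^sup>2 / a \<le> c" by simp
    then show ?thesis using ap by (simp add: divide_le_eq mult.commute)
  qed
  then have "sqrt (b\<^sup>2) \<le> sqrt (a * c)" by (rule real_sqrt_le_mono)
  then have "\<bar>b\<bar> \<le> sqrt a * sqrt c" by (simp add: real_sqrt_mult)
  then show ?thesis unfolding a_def b_def c_def by simp
qed

lemma tri:
  assumes psd: "Q_psd Lam t w"
  shows "sqrt (Bf Lam t w (x + y) (x + y)) \<le> sqrt (Bf Lam t w x x) + sqrt (Bf Lam t w y y)"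
proof -
  have a0: "Bf Lam t w x x \<ge> 0" "Bf Lam t w y y \<ge> 0" using psd unfolding Q_psd_Bf by blast+
  have "Bf Lam t w (x + y) (x + y) = Bf Lam t w (1 *\<^sub>R x + y) (1 *\<^sub>R x + y)" by simp
  also have "\<dots> = Bf Lam t w x x + 2 * Bf Lam t w x y + Bf Lam t w y y"
    by (simp only: Bf_expand) simp
  also have "\<dots> \<le> Bf Lam t w x x + 2 * (sqrt (Bf Lam t w x x) * sqrt (Bf Lam t w y y)) + Bf Lam t w y y"
    using CS[OF psd, of x y] by simp
  also have "\<dots> = (sqrt (Bf Lam t w x x) + sqrt (Bf Lam t w y y))\<^sup>2"
    using a0 by (simp add: power2_eq_square algebra_simps)
  finally have "sqrt (Bf Lam t w (x + y) (x + y)) \<le> sqrt ((sqrt (Bf Lam t w x x) + sqrt (Bf Lam t w y y))\<^sup>2)"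
    by (rule real_sqrt_le_mono)
  then show ?thesis using a0 by simp
qed

lemma tri_sum:
  assumes psd: "Q_psd Lam t w" and fin: "finite J"
  shows "sqrt (Bf Lam t w (\<Sum>j\<in>J. v j) (\<Sum>j\<in>J. v j)) \<le> (\<Sum>j\<in>J. sqrt (Bf Lam t w (v j) (v j)))"
  using fin
proof (induction J rule: finite_induct)
  case empty
  then show ?case by (simp add: Bf_zero)
next
  case (insert j J)
  have "sqrt (Bf Lam t w (\<Sum>i\<in>insert j J. v i) (\<Sum>i\<in>insert j J. v i))
      = sqrt (Bf Lam t w (v j + (\<Sum>i\<in>J. v i)) (v j + (\<Sum>i\<in>J. v i)))"
    using insert by simp
  also have "\<dots> \<le> sqrt (Bf Lam t w (v j) (v j)) + sqrt (Bf Lam t w (\<Sum>i\<in>J. v i) (\<Sum>i\<in>J. v i))"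
    by (rule tri[OF psd])
  also have "\<dots> \<le> sqrt (Bf Lam t w (v j) (v j)) + (\<Sum>i\<in>J. sqrt (Bf Lam t w (v i) (v i)))"
    using insert by simp
  also have "\<dots> = (\<Sum>i\<in>insert j J. sqrt (Bf Lam t w (v i) (v i)))" using insert by simp
  finally show ?case .
qed

lemma sqrt_scale: "c \<ge> 0 \<Longrightarrow> sqrt (Bf Lam t w (c *\<^sub>R x) (c *\<^sub>R x)) = c * sqrt (Bf Lam t w x x)"
  by (simp add: Bf_scale_both real_sqrt_mult)




lemma decomp_intro:
  assumes "finite (J :: nat set)" "J \<noteq> {}" "\<forall>j\<in>J. p j > 0 \<and> norm (y j) = 1"
    "sum p J = 1" "(\<Sum>j\<in>J. p j *\<^sub>R y j) = xv" "v = (\<Sum>j\<in>J. p j * conc_pure Lam t (y j))"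
  shows "v \<in> decomp_values Lam t xv"
  unfolding decomp_values_def using assms by blast

lemma lower_bound:
  assumes psd: "Q_psd Lam t w" and c: "c \<in> decomp_values Lam t xv"
  shows "sqrt (qform Lam t w (1, xv)) \<le> c"
proof -
  obtain J p y where cJ: "c = (\<Sum>j\<in>J. p j * conc_pure Lam t (y j))" and fin: "finite (J :: nat set)"
    and py: "\<forall>j\<in>J. p j > 0 \<and> norm (y j) = 1" and sp: "sum p J = 1"
    and sy: "(\<Sum>j\<in>J. p j *\<^sub>R y j) = xv"
    using c unfolding decomp_values_def by blast
  define v where "v j = p j *\<^sub>R ((1::real), y j)" for j
  have sv: "(\<Sum>j\<in>J. v j) = (1, xv)"
  proof (rule prod_eqI)
    show "fst (\<Sum>j\<in>J. v j) = fst (1, xv)" using sp by (simp add: fst_sum v_def)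
    show "snd (\<Sum>j\<in>J. v j) = snd (1, xv)" using sy by (simp add: snd_sum v_def)
  qed
  have each: "p j * conc_pure Lam t (y j) = sqrt (Bf Lam t w (v j) (v j))" if "j \<in> J" for j
  proof -
    have pj: "p j > 0" and ny: "norm (y j) = 1" using py that by auto
    have "sqrt (Bf Lam t w (v j) (v j)) = p j * sqrt (Bf Lam t w (1, y j) (1, y j))"
      unfolding v_def using pj by (intro sqrt_scale) simp
    moreover have "conc_pure Lam t (y j) = sqrt (Bf Lam t w (1, y j) (1, y j))"
      using conc_formula[OF ny, of Lam t w] by (simp only: qform_Bf)
    ultimately show ?thesis by simp
  qed
  have "sqrt (qform Lam t w (1, xv)) = sqrt (Bf Lam t w (\<Sum>j\<in>J. v j) (\<Sum>j\<in>J. v j))"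
    by (simp add: sv qform_Bf)
  also have "\<dots> \<le> (\<Sum>j\<in>J. sqrt (Bf Lam t w (v j) (v j)))" by (rule tri_sum[OF psd fin])
  also have "\<dots> = c" unfolding cJ using each by simp
  finally show ?thesis .
qed

lemma pure_piece:
  assumes g: "mink z z = 0" and f: "fst z > 0"
  shows "norm ((1 / fst z) *\<^sub>R snd z) = 1"
    and "fst z * conc_pure Lam t ((1 / fst z) *\<^sub>R snd z) = sqrt (Bf Lam t w z z)"
proof -
  have "(norm (snd z))\<^sup>2 = (fst z)\<^sup>2" using g by (simp add: mink_def dot_square_norm power2_eq_square)
  then have ns: "norm (snd z) = fst z" using f power2_eq_iff_nonneg[of "norm (snd z)" "fst z"] by simp
  show n1: "norm ((1 / fst z) *\<^sub>R snd z) = 1" using f ns by simp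
  have zz: "fst z *\<^sub>R ((1::real), (1 / fst z) *\<^sub>R snd z) = z" using f by (simp add: prod_eq_iff)
  have "fst z * conc_pure Lam t ((1 / fst z) *\<^sub>R snd z)
      = fst z * sqrt (Bf Lam t w (1, (1 / fst z) *\<^sub>R snd z) (1, (1 / fst z) *\<^sub>R snd z))"
    by (simp add: conc_formula[OF n1, of _ _ w] qform_Bf)
  also have "\<dots> = sqrt (Bf Lam t w (fst z *\<^sub>R ((1::real), (1 / fst z) *\<^sub>R snd z)) (fst z *\<^sub>R ((1::real), (1 / fst z) *\<^sub>R snd z)))"
    by (rule sqrt_scale[symmetric]) (simp add: order_less_imp_le f)
  also have "\<dots> = sqrt (Bf Lam t w z z)" by (simp only: zz)
  finally show "fst z * conc_pure Lam t ((1 / fst z) *\<^sub>R snd z) = sqrt (Bf Lam t w z z)" .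
qed

lemma two_pieces:
  assumes x: "(1, xv) = z1 + z2" and g1: "mink z1 z1 = 0" and g2: "mink z2 z2 = 0"
    and f1: "fst z1 > 0" and f2: "fst z2 > 0"
    and sq: "sqrt (Bf Lam t w z1 z1) + sqrt (Bf Lam t w z2 z2) = sqrt (Bf Lam t w (1, xv) (1, xv))"
  shows "sqrt (qform Lam t w (1, xv)) \<in> decomp_values Lam t xv"
proof -
  define zz where "zz j = (if j = (0::nat) then z1 else z2)" for j
  define p where "p j = fst (zz j)" for j
  define y where "y j = (1 / fst (zz j)) *\<^sub>R snd (zz j)" for j
  have gz: "mink (zz j) (zz j) = 0" "fst (zz j) > 0" for j using g1 g2 f1 f2 by (auto simp: zz_def)
  have J: "{0::nat, 1} \<noteq> {}" "finite {0::nat, 1}" by auto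
  show ?thesis
  proof (rule decomp_intro[OF J(2) J(1)])
    show "\<forall>j\<in>{0, 1}. 0 < p j \<and> norm (y j) = 1"
    proof
      fix j :: nat
      show "0 < p j \<and> norm (y j) = 1"
        using gz(2)[of j] pure_piece(1)[OF gz(1)[of j] gz(2)[of j]] unfolding p_def y_def by blast
    qed
    have "fst (1::real, xv) = fst z1 + fst z2" using arg_cong[OF x, of fst] by simp
    then show "sum p {0, 1} = 1" by (simp add: p_def zz_def)
    have "snd (1::real, xv) = snd z1 + snd z2" using arg_cong[OF x, of snd] by simp
    then show "(\<Sum>j\<in>{0, 1}. p j *\<^sub>R y j) = xv" using f1 f2 by (simp add: p_def y_def zz_def)
    have "(\<Sum>j\<in>{0::nat, 1}. p j * conc_pure Lam t (y j)) = sqrt (Bf Lam t w z1 z1) + sqrt (Bf Lam t w z2 z2)"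
    proof -
      have "fst z1 * conc_pure Lam t ((1 / fst z1) *\<^sub>R snd z1) = sqrt (Bf Lam t w z1 z1)"
        by (rule pure_piece(2)[OF g1 f1])
      moreover have "fst z2 * conc_pure Lam t ((1 / fst z2) *\<^sub>R snd z2) = sqrt (Bf Lam t w z2 z2)"
        by (rule pure_piece(2)[OF g2 f2])
      ultimately show ?thesis by (simp add: p_def y_def zz_def)
    qed
    then show "sqrt (qform Lam t w (1, xv)) = (\<Sum>j\<in>{0, 1}. p j * conc_pure Lam t (y j))"
      using sq by (simp add: qform_Bf)
  qed
qed

lemma sign_fst:
  assumes nx: "norm xv \<le> 1" and g: "mink u u = 0" and m: "mink (1, xv) u > 0"
  shows "fst u > 0"
proof (rule ccontr)
  assume "\<not> fst u > 0"
  then have f: "fst u \<le> 0" by simp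
  have "(norm (snd u))\<^sup>2 = (fst u)\<^sup>2" using g by (simp add: mink_def dot_square_norm power2_eq_square)
  then have ns: "norm (snd u) = - fst u" using f power2_eq_iff_nonneg[of "norm (snd u)" "- fst u"] by simp
  have "\<bar>xv \<bullet> snd u\<bar> \<le> norm xv * norm (snd u)" by (rule Cauchy_Schwarz_ineq2)
  also have "\<dots> \<le> 1 * norm (snd u)" using nx by (intro mult_right_mono) auto
  finally have "xv \<bullet> snd u \<ge> fst u" using ns by linarith
  then have "mink (1, xv) u \<le> 0" by (simp add: mink_def)
  then show False using m by simp
qed

lemma nonorth:
  assumes nx: "norm xv < 1" and g: "mink u u = 0" and u0: "u \<noteq> 0"
  shows "mink (1, xv) u \<noteq> 0"
proof
  assume m: "mink (1, xv) u = 0"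
  have "(norm (snd u))\<^sup>2 = (fst u)\<^sup>2" using g by (simp add: mink_def dot_square_norm power2_eq_square)
  then have ns: "norm (snd u) = \<bar>fst u\<bar>" using power2_eq_iff_nonneg[of "norm (snd u)" "\<bar>fst u\<bar>"] by simp
  have "snd u \<noteq> 0"
  proof
    assume "snd u = 0"
    then have "fst u = 0" using ns by simp
    then show False using u0 \<open>snd u = 0\<close> by (simp add: prod_eq_iff)
  qed
  then have np: "norm (snd u) > 0" by simp
  have "\<bar>xv \<bullet> snd u\<bar> \<le> norm xv * norm (snd u)" by (rule Cauchy_Schwarz_ineq2)
  also have "\<dots> < 1 * norm (snd u)" using nx np by (intro mult_strict_right_mono) auto
  finally have "\<bar>xv \<bullet> snd u\<bar> < \<bar>fst u\<bar>" using ns by simp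
  moreover have "fst u = xv \<bullet> snd u" using m by (simp add: mink_def)
  ultimately show False by simp
qed




lemma upper_bound:
  assumes psd: "Q_psd Lam t w" and nk: "n \<in> Q_ker Lam t w" and n0: "n \<noteq> 0"
    and gn: "mink n n \<le> 0" and nx: "norm xv \<le> 1"
  shows "sqrt (qform Lam t w (1, xv)) \<in> decomp_values Lam t xv"
proof -
  define x :: mvec where "x = (1, xv)"
  define gx where "gx = mink x x"
  have gx_eq: "gx = 1 - (norm xv)\<^sup>2" by (simp add: gx_def x_def mink_def dot_square_norm)
  have "(norm xv)\<^sup>2 \<le> 1" using nx by (simp add: power_le_one)
  then have gx0: "gx \<ge> 0" using gx_eq by simp
  show ?thesis
  proof (cases "gx = 0")
    case True
    then have "(norm xv)\<^sup>2 = 1" using gx_eq by simp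
    then have ny: "norm xv = 1" using norm_ge_zero[of xv] by (auto simp add: power2_eq_1_iff)
    show ?thesis
    proof (rule decomp_intro[of "{0}" "\<lambda>_. 1" "\<lambda>_. xv"])
      show "sqrt (qform Lam t w (1, xv)) = (\<Sum>j\<in>{0}. 1 * conc_pure Lam t xv)"
        using conc_formula[OF ny, of Lam t w] by simp
    qed (use ny in auto)
  next
    case False
    then have gxp: "gx > 0" using gx0 by simp
    then have nxl: "norm xv < 1" using gx_eq
      by (smt (verit) nx norm_ge_zero power2_eq_1_iff power_le_one)
    have Bn: "Bf Lam t w n y = 0" for y by (rule ker_Bf[OF nk])
    have Bn2: "Bf Lam t w y n = 0" for y using Bn[of y] by (simp add: Bf_sym)
    define a where "a = mink n n"
    define M where "M = mink n x"
    have Mx: "mink x n = M" by (simp add: M_def mink_sym)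
    have qs: "Bf Lam t w (s *\<^sub>R n + x) (s *\<^sub>R n + x) = Bf Lam t w x x" for s
      by (simp add: Bf_expand Bn)
    have gs: "mink (s *\<^sub>R n + x) (s *\<^sub>R n + x) = s\<^sup>2 * a + 2 * s * M + gx" for s
      by (simp only: mink_expand a_def M_def gx_def)
    have ms: "mink x (s *\<^sub>R n + x) = s * M + gx" for s
      by (simp add: mink_add2 mink_scale2 Mx gx_def)
    have good: "mink (s *\<^sub>R n + x) (s *\<^sub>R n + x) = 0 \<and> fst (s *\<^sub>R n + x) > 0"
      if r: "a * s\<^sup>2 + 2 * M * s + gx = 0" for s
    proof
      show g0: "mink (s *\<^sub>R n + x) (s *\<^sub>R n + x) = 0" using gs[of s] r by (simp add: algebra_simps)
      have "a * s\<^sup>2 \<le> 0" using gn a_def by (simp add: mult_nonpos_nonneg)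
      moreover have "2 * (s * M + gx) = gx - a * s\<^sup>2" using r by (simp add: algebra_simps)
      ultimately have "2 * (s * M + gx) > 0" using gxp by linarith
      then have "mink x (s *\<^sub>R n + x) > 0" using ms by simp
      then show "fst (s *\<^sub>R n + x) > 0" using sign_fst[OF nx g0] by (simp add: x_def)
    qed
    have sqx: "sqrt (qform Lam t w (1, xv)) = sqrt (Bf Lam t w x x)" by (simp add: qform_Bf x_def)
    show ?thesis
    proof (cases "a < 0")
      case True
      define D where "D = M\<^sup>2 - a * gx"
      have agx: "a * gx < 0" using True gxp by (simp add: mult_neg_pos)
      have DM: "M\<^sup>2 < D" using agx D_def by simp
      have D0: "D \<ge> 0" using DM by (smt (verit) zero_le_power2)
      define sD where "sD = sqrt D"
      have sD2: "sD\<^sup>2 = M\<^sup>2 - a * gx" using D0 by (simp add: sD_def D_def)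
      have Ms: "\<bar>M\<bar> < sD" unfolding sD_def using real_sqrt_less_mono[OF DM] by simp
      have an: "a \<noteq> 0" using True by simp
      define s1 where "s1 = (- M + sD) / a"
      define s2 where "s2 = (- M - sD) / a"
      have "- M + sD > 0" using Ms abs_ge_self[of M] by linarith
      then have s1n: "s1 < 0" using True unfolding s1_def by (rule divide_pos_neg)
      have "- M - sD < 0" using Ms abs_ge_minus_self[of M] by linarith
      then have s2p: "s2 > 0" using True unfolding s2_def by (rule divide_neg_neg)
      have "s1 * a = - M + sD" using an by (simp add: s1_def)
      then have r1: "a * s1\<^sup>2 + 2 * M * s1 + gx = 0" using root_lemma[of a s1 M sD gx] an sD2 by simp
      have "s2 * a = - M - sD" using an by (simp add: s2_def)
      then have r2: "a * s2\<^sup>2 + 2 * M * s2 + gx = 0" using root_lemma[of a s2 M sD gx] an sD2 by simp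
      define u1 where "u1 = s1 *\<^sub>R n + x"
      define u2 where "u2 = s2 *\<^sub>R n + x"
      define l where "l = s2 / (s2 - s1)"
      have d: "s2 - s1 > 0" using s1n s2p by simp
      have l0: "l > 0" using d s2p by (simp add: l_def)
      have l1: "1 - l > 0" using d s1n by (simp add: l_def field_simps)
      have coef: "l * s1 + (1 - l) * s2 = 0" using d by (simp add: l_def field_simps)
      define z1 where "z1 = l *\<^sub>R u1"
      define z2 where "z2 = (1 - l) *\<^sub>R u2"
      have "z1 + z2 = (l * s1 + (1 - l) * s2) *\<^sub>R n + x"
        by (simp add: z1_def z2_def u1_def u2_def algebra_simps)
      then have "z1 + z2 = x" using coef by simp
      then have xz: "(1, xv) = z1 + z2" by (simp add: x_def)
      have G1: "mink u1 u1 = 0 \<and> fst u1 > 0" unfolding u1_def by (rule good[OF r1])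
      have G2: "mink u2 u2 = 0 \<and> fst u2 > 0" unfolding u2_def by (rule good[OF r2])
      show ?thesis
      proof (rule two_pieces[OF xz])
        show "mink z1 z1 = 0" using G1 unfolding z1_def mink_scale_both by simp
        show "mink z2 z2 = 0" using G2 unfolding z2_def mink_scale_both by simp
        show "fst z1 > 0" using G1 l0 by (simp add: z1_def)
        show "fst z2 > 0" using G2 l1 by (simp add: z2_def)
        have "sqrt (Bf Lam t w z1 z1) = l * sqrt (Bf Lam t w x x)"
          unfolding z1_def using l0 by (simp add: sqrt_scale u1_def qs)
        moreover have "sqrt (Bf Lam t w z2 z2) = (1 - l) * sqrt (Bf Lam t w x x)"
          unfolding z2_def using l1 by (simp add: sqrt_scale u2_def qs)
        ultimately show "sqrt (Bf Lam t w z1 z1) + sqrt (Bf Lam t w z2 z2) = sqrt (Bf Lam t w (1, xv) (1, xv))"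
          by (simp add: x_def algebra_simps)
      qed
    next
      case False
      then have a0: "a = 0" using gn a_def by simp
      have "mink (1, xv) n \<noteq> 0" using nonorth[OF nxl _ n0] a0 a_def by simp
      then have Mn: "M \<noteq> 0" using Mx by (simp add: x_def)
      define s1 where "s1 = - gx / (2 * M)"
      have r1: "a * s1\<^sup>2 + 2 * M * s1 + gx = 0" using a0 Mn by (simp add: s1_def)
      define z1 where "z1 = s1 *\<^sub>R n + x"
      define z2 where "z2 = (- s1) *\<^sub>R n"
      have xz: "(1, xv) = z1 + z2" by (simp add: z1_def z2_def x_def)
      have G1: "mink z1 z1 = 0 \<and> fst z1 > 0" unfolding z1_def by (rule good[OF r1])
      have g2: "mink z2 z2 = 0" unfolding z2_def mink_scale_both using a0 a_def by simp
      have "mink x z2 = - s1 * M" unfolding z2_def mink_scale2 Mx by simp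
      also have "\<dots> = gx / 2" using Mn by (simp add: s1_def)
      finally have "mink (1, xv) z2 > 0" using gxp by (simp add: x_def)
      then have f2: "fst z2 > 0" by (rule sign_fst[OF nx g2])
      show ?thesis
      proof (rule two_pieces[OF xz _ g2 _ f2])
        show "mink z1 z1 = 0" "fst z1 > 0" using G1 by auto
        have "Bf Lam t w z2 z2 = 0" unfolding z2_def Bf_scale_both by (simp add: Bn)
        moreover have "Bf Lam t w z1 z1 = Bf Lam t w x x" unfolding z1_def by (rule qs)
        ultimately show "sqrt (Bf Lam t w z1 z1) + sqrt (Bf Lam t w z2 z2) = sqrt (Bf Lam t w (1, xv) (1, xv))"
          by (simp add: x_def)
      qed
    qed
  qed
qed

theorem theorem3:
  fixes Lam :: "real^3^3" and t :: "real^3"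
  assumes "positive_map Lam t"
  shows "(\<exists>!w0. Q_psd Lam t w0 \<and> Q_degenerate Lam t w0 \<and>
                 (\<exists>n\<in>Q_ker Lam t w0. n \<noteq> 0 \<and> mink n n \<le> 0))
       \<and> (\<forall>w0. Q_psd Lam t w0 \<and> Q_degenerate Lam t w0 \<and>
                 (\<exists>n\<in>Q_ker Lam t w0. n \<noteq> 0 \<and> mink n n \<le> 0) \<longrightarrow>
            (\<forall>xv::real^3. norm xv \<le> 1 \<longrightarrow>
               sqrt (qform Lam t w0 (1, xv)) \<in> decomp_values Lam t xv \<and>
               (\<forall>c\<in>decomp_values Lam t xv. sqrt (qform Lam t w0 (1, xv)) \<le> c)))"
proof
  let ?P = "\<lambda>w0. Q_psd Lam t w0 \<and> Q_degenerate Lam t w0 \<and>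
                 (\<exists>n\<in>Q_ker Lam t w0. n \<noteq> 0 \<and> mink n n \<le> 0)"
  show "\<exists>!w0. ?P w0"
  proof -
    obtain w0 n where p: "Q_psd Lam t w0" and nk: "n \<in> Q_ker Lam t w0" and n0: "n \<noteq> 0"
      and gn: "mink n n \<le> 0"
      using exists_w0[OF assms] by blast
    have "Q_degenerate Lam t w0" using nk n0 unfolding Q_degenerate_def by auto
    then have ex: "?P w0" using p nk n0 gn by blast
    have un: "w1 = w2" if "?P w1" "?P w2" for w1 w2
    proof (rule ccontr)
      assume ne: "w1 \<noteq> w2"
      show False
      proof (cases "w1 < w2")
        case True
        then show False using that(2) uniq_aux[OF True] that(1) by blast
      next
        case False
        then have "w2 < w1" using ne by simp
        then show False using that(1) uniq_aux[OF \<open>w2 < w1\<close>] that(2) by blast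
      qed
    qed
    show ?thesis using ex un by blast
  qed
  show "\<forall>w0. ?P w0 \<longrightarrow> (\<forall>xv::real^3. norm xv \<le> 1 \<longrightarrow>
               sqrt (qform Lam t w0 (1, xv)) \<in> decomp_values Lam t xv \<and>
               (\<forall>c\<in>decomp_values Lam t xv. sqrt (qform Lam t w0 (1, xv)) \<le> c))"
  proof (intro allI impI conjI ballI)
    fix w0 and xv :: "real^3" and c
    assume P: "?P w0" and nx: "norm xv \<le> 1"
    then obtain n where "Q_psd Lam t w0" "n \<in> Q_ker Lam t w0" "n \<noteq> 0" "mink n n \<le> 0" by blast
    then show "sqrt (qform Lam t w0 (1, xv)) \<in> decomp_values Lam t xv"
      using upper_bound nx by blast
    assume "c \<in> decomp_values Lam t xv"
    then show "sqrt (qform Lam t w0 (1, xv)) \<le> c" using lower_bound P by blast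
  qed
qed


end
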